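(* For every linear-time property $\varphi$ over a finite alphabet $\Sigma$ and every bound $n \in \mathbb{N}$, there is a deterministic safety automaton $\mathcal{A}$ with $O(|\Sigma|^n \cdot 2^{n \log n})$ states such that $L(\mathcal{A})$ is an $n$-lasso-precise underapproximation of $\varphi$, i.e., $L(\mathcal{A}) \subseteq \varphi$ and $L_n(L(\mathcal{A})) = L_n(\varphi)$.
   Context: A linear-time property over $\Sigma$ is a set $\varphi \subseteq \Sigma^\omega$. A lasso of length $n$ is a pair $(u,v)$ with $u\in\Sigma^*$, $v\in\Sigma^+$, $|u\cdot v|=n$, inducing the word $u\cdot v^\omega$. For a property $\psi$, $L_n(\psi)=\{u\cdot v^\omega \in \psi \mid u\in\Sigma^*, v\in\Sigma^+, |u\cdot v|=n\}$. A property $\varphi'$ is an $n$-lasso-precise underapproximation of $\varphi$ if $\varphi'\subseteq\varphi$ and $L_n(\varphi')=L_n(\varphi)$. A nondeterministic parity automaton over $\Sigma$ is $\mathcal{A}=(Q,Q_0,\delta,\mu)$ with finite state set $Q$, initial states $Q_0\subseteq Q$, transition function $\delta: Q\times\Sigma\to\mathcal{P}(Q)$, and coloring $\mu: Q\to C$ for a finite $C\subset\mathbb{N}$. A run on $\alpha_1\alpha_2\cdots$ is a sequence $q_0q_1\cdots$ with $q_0\in Q_0$ and $q_{i+1}\in\delta(q_i,\alpha_{i+1})$; it is accepting if the highest color occurring infinitely often in $\mu(q_0)\mu(q_1)\cdots$ is even; $L(\mathcal{A})$ is the set of words with an accepting run. The automaton is deterministic if $|Q_0|=1$ and $|\delta(q,\alpha)|\le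 1$ for all $q,\alpha$ (missing successors allowed). A safety automaton is one where all states have color $0$, so every infinite run is accepting. The size of an automaton is its number of states. *)

theory Defs
  imports Complex_Main
begin

definition omega_words :: "'a set \<Rightarrow> (nat \<Rightarrow> 'a) set" where
  "omega_words \<Sigma> = {w. \<forall>i. w i \<in> \<Sigma>}"

definition lasso_word :: "'a list \<Rightarrow> 'a list \<Rightarrow> nat \<Rightarrow> 'a" where
  "lasso_word u v i = (if i < length u then u ! i else v ! ((i - length u) mod length v))"

definition lasso_lang :: "'a set \<Rightarrow> nat \<Rightarrow> (nat \<Rightarrow> 'a) set \<Rightarrow> (nat \<Rightarrow> 'a) set" where
  "lasso_lang \<Sigma> n \<psi> = {lasso_word u v | u v. set u \<subseteq> \<Sigma> \<and> set v \<subseteq> \<Sigma> \<and> v \<noteq> [] \<and>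
      length (u @ v) = n \<and> lasso_word u v \<in> \<psi>}"

definition lasso_precise_under :: "'a set \<Rightarrow> nat \<Rightarrow> (nat \<Rightarrow> 'a) set \<Rightarrow> (nat \<Rightarrow> 'a) set \<Rightarrow> bool" where
  "lasso_precise_under \<Sigma> n \<phi>' \<phi> \<longleftrightarrow> \<phi>' \<subseteq> \<phi> \<and> lasso_lang \<Sigma> n \<phi>' = lasso_lang \<Sigma> n \<phi>"

record 'a npa =
  states :: "nat set"
  init :: "nat set"
  trans :: "nat \<Rightarrow> 'a \<Rightarrow> nat set"
  color :: "nat \<Rightarrow> nat"

definition wf_npa :: "'a set \<Rightarrow> 'a npa \<Rightarrow> bool" where
  "wf_npa \<Sigma> A \<longleftrightarrow> finite (states A) \<and> init A \<subseteq> states A \<and>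
     (\<forall>q \<in> states A. \<forall>a \<in> \<Sigma>. trans A q a \<subseteq> states A)"

definition is_run :: "'a npa \<Rightarrow> (nat \<Rightarrow> 'a) \<Rightarrow> (nat \<Rightarrow> nat) \<Rightarrow> bool" where
  "is_run A w r \<longleftrightarrow> r 0 \<in> init A \<and> (\<forall>i. r (Suc i) \<in> trans A (r i) (w i))"

definition accepting_run :: "'a npa \<Rightarrow> (nat \<Rightarrow> nat) \<Rightarrow> bool" where
  "accepting_run A r \<longleftrightarrow>
     (\<exists>k. even k \<and> (\<exists>\<^sub>\<infinity> i. color A (r i) = k) \<and>
          (\<forall>k'. k < k' \<longrightarrow> \<not> (\<exists>\<^sub>\<infinity> i. color A (r i) = k')))"

definition lang :: "'a set \<Rightarrow> 'a npa \<Rightarrow> (nat \<Rightarrow> 'a) set" where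
  "lang \<Sigma> A = {w \<in> omega_words \<Sigma>. \<exists>r. is_run A w r \<and> accepting_run A r}"

definition deterministic :: "'a set \<Rightarrow> 'a npa \<Rightarrow> bool" where
  "deterministic \<Sigma> A \<longleftrightarrow> card (init A) = 1 \<and>
     (\<forall>q \<in> states A. \<forall>a \<in> \<Sigma>. card (trans A q a) \<le> 1)"

definition safety :: "'a npa \<Rightarrow> bool" where
  "safety A \<longleftrightarrow> (\<forall>q \<in> states A. color A q = 0)"

definition size_npa :: "'a npa \<Rightarrow> nat" where
  "size_npa A = card (states A)"

end

theory Submission
  imports Defs
begin

definition res :: "(nat \<Rightarrow> 'a) set \<Rightarrow> 'a list \<Rightarrow> (nat \<Rightarrow> 'a) set" where
 "res S x = {(\<lambda>i. w (i + length x)) | w. w \<in> S \<and> (\<forall>i<length x. w i = x ! i)}"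

definition der :: "(nat \<Rightarrow> 'a) set \<Rightarrow> 'a \<Rightarrow> (nat \<Rightarrow> 'a) set" where
 "der R a = {(\<lambda>i. w (Suc i)) | w. w \<in> R \<and> w 0 = a}"

lemma der_res: "der (res S x) a = res S (x @ [a])"
proof
  show "der (res S x) a \<subseteq> res S (x @ [a])"
  proof
    fix z assume "z \<in> der (res S x) a"
    then obtain w where w: "w \<in> S" "\<forall>i<length x. w i = x ! i" "w (length x) = a"
      and z: "z = (\<lambda>i. w (Suc i + length x))"
      unfolding der_def res_def by auto
    have "\<forall>i<length (x@[a]). w i = (x@[a]) ! i"
      using w by (auto simp: nth_append less_Suc_eq)
    moreover have "z = (\<lambda>i. w (i + length (x@[a])))" using z by simp
    ultimately show "z \<in> res S (x @ [a])" using w unfolding res_def by blast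
  qed
next
  show "res S (x @ [a]) \<subseteq> der (res S x) a"
  proof
    fix z assume "z \<in> res S (x @ [a])"
    then obtain w where w: "w \<in> S" "\<forall>i<Suc (length x). w i = (x@[a]) ! i"
      and z: "z = (\<lambda>i. w (i + Suc (length x)))"
      unfolding res_def by auto
    have 1: "\<forall>i<length x. w i = x ! i" using w(2) by (auto simp: nth_append)
    have 2: "w (length x) = a" using w(2)[rule_format, of "length x"] by simp
    have "(\<lambda>i. w (i + length x)) \<in> res S x" using w(1) 1 unfolding res_def by blast
    then show "z \<in> der (res S x) a" unfolding der_def using z 2
      by (auto intro!: exI[of _ "\<lambda>i. w (i + length x)"])
  qed
qed

lemma res_map: "w \<in> S \<Longrightarrow> (\<lambda>j. w (j + i)) \<in> res S (map w [0..<i])"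
  unfolding res_def by auto

lemma lasso_period:
  assumes "v \<noteq> []" "length u \<le> i"
  shows "lasso_word u v (i + k * length v) = lasso_word u v i"
proof -
  have "i + k * length v - length u = (i - length u) + k * length v" using assms by simp
  then have "(i + k * length v - length u) mod length v = (i - length u) mod length v" by simp
  then show ?thesis using assms unfolding lasso_word_def by simp
qed

lemma lasso_agree:
  assumes "v \<noteq> []" "length u + length v = n" "v' \<noteq> []" "length u' + length v' = n"
    and ag: "\<forall>i < n + n * n. lasso_word u v i = lasso_word u' v' i"
  shows "lasso_word u v = lasso_word u' v'"
proof
  fix i
  define P where "P = length v * length v'"
  have P: "P \<le> n * n" unfolding P_def using assms by (intro mult_le_mono) auto
  show "lasso_word u v i = lasso_word u' v' i"
  proof (induction i rule: less_induct)
    case (less i)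
    show ?case
    proof (cases "i < n + P")
      case True then show ?thesis using ag P by auto
    next
      case False
      define j where "j = i - P"
      have j: "i = j + P" "n \<le> j" using False unfolding j_def by auto
      have "P > 0" unfolding P_def using assms by auto
      then have "j < i" using j by simp
      have "lasso_word u v i = lasso_word u v (j + length v' * length v)"
        using j P_def by (simp add: mult.commute)
      also have "\<dots> = lasso_word u v j" using assms j by (intro lasso_period) auto
      also have "\<dots> = lasso_word u' v' j" using less \<open>j < i\<close> by auto
      also have "\<dots> = lasso_word u' v' (j + length v * length v')"
        using assms j by (intro lasso_period[symmetric]) auto
      also have "\<dots> = lasso_word u' v' i" using j P_def by simp
      finally show ?thesis .
    qed
  qed
qed

lemma lasso_shift:
  assumes "v \<noteq> []" "length u + length v = n" "n \<le> m"
  shows "\<exists>j<n. (\<lambda>i. lasso_word u v (i + m)) = (\<lambda>i. lasso_word u v (i + j))"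
proof -
  define j where "j = length u + (m - length u) mod length v"
  have "(m - length u) mod length v < length v" using assms by simp
  then have "j < n" unfolding j_def using assms by linarith
  moreover have "(\<lambda>i. lasso_word u v (i + m)) = (\<lambda>i. lasso_word u v (i + j))"
  proof
    fix i
    have "(i + m - length u) mod length v = (i + j - length u) mod length v"
      unfolding j_def using assms by (simp add: mod_simps)
    then show "lasso_word u v (i + m) = lasso_word u v (i + j)"
      unfolding lasso_word_def j_def using assms by auto
  qed
  ultimately show ?thesis by blast
qed


lemma main:
  fixes \<Sigma> :: "'a set" and \<phi> :: "(nat \<Rightarrow> 'a) set" and n :: nat
  assumes fin: "finite \<Sigma>" and ne: "\<Sigma> \<noteq> {}" and phis: "\<phi> \<subseteq> omega_words \<Sigma>"
  shows "\<exists>A :: 'a npa. wf_npa \<Sigma> A \<and> deterministic \<Sigma> A \<and> safety A \<and>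
           size_npa A \<le> 1 + n * card \<Sigma> ^ n * (n * n + 2 * n) \<and>
           lasso_precise_under \<Sigma> n (lang \<Sigma> A) \<phi>"
proof -
  define S where "S = lasso_lang \<Sigma> n \<phi>"
  have Sform: "\<exists>u v. s = lasso_word u v \<and> v \<noteq> [] \<and> length u + length v = n" if "s \<in> S" for s
    using that unfolding S_def lasso_lang_def by auto
  have Ssub: "S \<subseteq> \<phi>" unfolding S_def lasso_lang_def by auto
  define L where "L = {x. set x \<subseteq> \<Sigma> \<and> length x = n}"
  have finL: "finite L" unfolding L_def using fin by (simp add: finite_lists_length_eq)
  have cardL: "card L = card \<Sigma> ^ n" unfolding L_def by (rule card_lists_length_eq[OF fin])
  have Simg: "S \<subseteq> (\<lambda>(k,x). lasso_word (take k x) (drop k x)) ` ({..<n} \<times> L)"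
  proof
    fix s assume "s \<in> S"
    then obtain u v where uv: "s = lasso_word u v" "set u \<subseteq> \<Sigma>" "set v \<subseteq> \<Sigma>" "v \<noteq> []"
        "length (u @ v) = n"
      unfolding S_def lasso_lang_def by auto
    have "length u < n" using uv by auto
    moreover have "u @ v \<in> L" using uv unfolding L_def by auto
    moreover have "s = lasso_word (take (length u) (u @ v)) (drop (length u) (u @ v))" using uv by simp
    ultimately show "s \<in> (\<lambda>(k,x). lasso_word (take k x) (drop k x)) ` ({..<n} \<times> L)" by force
  qed
  have finS: "finite S" by (rule finite_subset[OF Simg]) (use finL in auto)
  have cardS: "card S \<le> n * card \<Sigma> ^ n"
  proof -
    have "card S \<le> card ((\<lambda>(k,x). lasso_word (take k x) (drop k x)) ` ({..<n} \<times> L))"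
      by (rule card_mono[OF _ Simg]) (use finL in auto)
    also have "\<dots> \<le> card ({..<n} \<times> L)" by (rule card_image_le) (use finL in auto)
    also have "\<dots> = n * card \<Sigma> ^ n" by (simp add: card_cartesian_product cardL)
    finally show ?thesis .
  qed
  define N where "N = n + n * n"
  have uniq: "w = w'" if H: "w \<in> S" "w' \<in> S" "\<forall>i<N. w i = w' i" for w w'
  proof -
    obtain u v where 1: "w = lasso_word u v" "v \<noteq> []" "length u + length v = n" using Sform H(1) by blast
    obtain u' v' where 2: "w' = lasso_word u' v'" "v' \<noteq> []" "length u' + length v' = n" using Sform H(2) by blast
    show ?thesis using lasso_agree[of v u n v' u'] 1 2 H(3) N_def by auto
  qed
  define Res where "Res = insert (res S []) {res S x | x. res S x \<noteq> {}}"
  define I1 where "I1 = (\<lambda>(w,m). res S (map w [0..<m])) ` (S \<times> {..<N})"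
  define I2 where "I2 = (\<lambda>(w::nat\<Rightarrow>'a,j). {\<lambda>i. w (i + j)}) ` (S \<times> {..<n})"
  have Rsub: "Res \<subseteq> insert (res S []) (I1 \<union> I2)"
  proof
    fix R assume "R \<in> Res"
    show "R \<in> insert (res S []) (I1 \<union> I2)"
    proof (cases "R = res S []")
      case True then show ?thesis by simp
    next
      case False
      then obtain x where x: "R = res S x" "res S x \<noteq> {}" using \<open>R \<in> Res\<close> unfolding Res_def by auto
      then obtain w where w: "w \<in> S" "\<forall>i<length x. w i = x ! i" unfolding res_def by auto
      have xe: "x = map w [0..<length x]" by (rule nth_equalityI) (use w in auto)
      show ?thesis
      proof (cases "length x < N")
        case True
        then have "R \<in> I1" unfolding I1_def using x w xe by force
        then show ?thesis by simp
      next
        case False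
        have "res S x = {\<lambda>i. w (i + length x)}"
        proof
          show "res S x \<subseteq> {\<lambda>i. w (i + length x)}"
          proof
            fix z assume "z \<in> res S x"
            then obtain w' where w': "w' \<in> S" "\<forall>i<length x. w' i = x ! i" "z = (\<lambda>i. w' (i + length x))"
              unfolding res_def by auto
            have "\<forall>i<N. w' i = w i" using w w' False by auto
            then have "w' = w" using uniq w' w by blast
            then show "z \<in> {\<lambda>i. w (i + length x)}" using w' by simp
          qed
        next
          show "{\<lambda>i. w (i + length x)} \<subseteq> res S x" unfolding res_def using w by auto
        qed
        moreover obtain u v where uv: "w = lasso_word u v" "v \<noteq> []" "length u + length v = n"
          using Sform w(1) by blast
        moreover have "n \<le> length x" using False N_def by simp
        ultimately obtain j where "j < n" "R = {\<lambda>i. w (i + j)}"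
          using lasso_shift[of v u n "length x"] x(1) by metis
        then have "R \<in> I2" unfolding I2_def using w(1) by force
        then show ?thesis by simp
      qed
    qed
  qed
  have finRes: "finite Res"
    by (rule finite_subset[OF Rsub]) (use finS in \<open>auto simp: I1_def I2_def\<close>)
  have cardRes: "card Res \<le> 1 + n * card \<Sigma> ^ n * (n * n + 2 * n)"
  proof -
    have "card Res \<le> card (insert (res S []) (I1 \<union> I2))"
      by (rule card_mono[OF _ Rsub]) (use finS in \<open>auto simp: I1_def I2_def\<close>)
    also have "\<dots> \<le> Suc (card (I1 \<union> I2))" by (rule card_insert_le_m1) auto
    also have "card (I1 \<union> I2) \<le> card I1 + card I2" by (rule card_Un_le)
    also have "card I1 \<le> card S * N"
      unfolding I1_def by (rule order.trans[OF card_image_le]) (use finS in \<open>auto simp: card_cartesian_product\<close>)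
    also have "card I2 \<le> card S * n"
      unfolding I2_def by (rule order.trans[OF card_image_le]) (use finS in \<open>auto simp: card_cartesian_product\<close>)
    finally have "card Res \<le> 1 + card S * (N + n)" by (simp add: algebra_simps)
    also have "\<dots> \<le> 1 + n * card \<Sigma> ^ n * (N + n)" using cardS by simp
    finally show ?thesis unfolding N_def by (simp add: algebra_simps)
  qed
  obtain f where bij: "bij_betw f Res {0..<card Res}" using ex_bij_betw_finite_nat[OF finRes] by blast
  define g where "g = the_inv_into Res f"
  have injf: "inj_on f Res" and imf: "f ` Res = {0..<card Res}" using bij by (auto simp: bij_betw_def)
  have fR: "f R < card Res" if "R \<in> Res" for R
  proof -
    have "f R \<in> f ` Res" using that by (rule imageI)
    then show ?thesis unfolding imf by simp
  qed
  have gf: "g (f R) = R" if "R \<in> Res" for R unfolding g_def using the_inv_into_f_f[OF injf that] .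
  have gR: "g q \<in> Res" if "q < card Res" for q
  proof -
    have "q \<in> f ` Res" unfolding imf using that by simp
    then obtain R where "R \<in> Res" "q = f R" by blast
    then show ?thesis using gf by simp
  qed
  have derRes: "der R a \<in> Res" if H: "R \<in> Res" "der R a \<noteq> {}" for R a
  proof -
    obtain x where "R = res S x" using H(1) unfolding Res_def by blast
    then have "der R a = res S (x @ [a])" by (simp add: der_res)
    then show ?thesis using H(2) unfolding Res_def by auto
  qed
  have res0: "res S [] \<in> Res" unfolding Res_def by simp
  have resne: "res S x \<in> Res" if "res S x \<noteq> {}" for x using that unfolding Res_def by auto
  define A :: "'a npa" where "A = \<lparr>states = {0..<card Res}, init = {f (res S [])},
     trans = (\<lambda>q a. if q < card Res \<and> der (g q) a \<noteq> {} then {f (der (g q) a)} else {}),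
     color = (\<lambda>_. 0)\<rparr>"
  define Rw where "Rw = (\<lambda>(w::nat \<Rightarrow> 'a) i. res S (map w [0..<i]))"
  have RwSuc: "Rw w (Suc i) = der (Rw w i) (w i)" for w i unfolding Rw_def by (simp add: der_res)
  have langA: "lang \<Sigma> A = S"
  proof
    show "lang \<Sigma> A \<subseteq> S"
    proof
      fix w assume "w \<in> lang \<Sigma> A"
      then obtain r where run: "is_run A w r" unfolding lang_def by auto
      have inv: "r i = f (Rw w i) \<and> Rw w i \<in> Res" for i
      proof (induction i)
        case 0 then show ?case using run res0 unfolding is_run_def A_def Rw_def by simp
      next
        case (Suc i)
        have "r (Suc i) \<in> trans A (r i) (w i)" using run unfolding is_run_def by blast
        then have c: "r i < card Res" "der (g (r i)) (w i) \<noteq> {}" "r (Suc i) = f (der (g (r i)) (w i))"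
          unfolding A_def by (auto split: if_splits)
        have "g (r i) = Rw w i" using Suc gf by simp
        then show ?case using c RwSuc derRes Suc by auto
      qed
      have ne: "Rw w (Suc i) \<noteq> {}" for i
      proof -
        have "r (Suc i) \<in> trans A (r i) (w i)" using run unfolding is_run_def by blast
        then have c: "der (g (r i)) (w i) \<noteq> {}" unfolding A_def by (auto split: if_splits)
        have "g (r i) = Rw w i" using inv gf by simp
        then show ?thesis using c RwSuc by simp
      qed
      have "\<exists>w'. w' \<in> S \<and> (\<forall>j<Suc i. w' j = w j)" for i
      proof -
        obtain z where "z \<in> Rw w (Suc i)" using ne by blast
        then show ?thesis unfolding Rw_def res_def by (auto simp del: upt_Suc)
      qed
      then obtain W where W: "\<And>i. W i \<in> S \<and> (\<forall>j<Suc i. W i j = w j)" by metis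
      have "finite (W ` UNIV)" using finS W by (meson finite_subset image_subset_iff)
      then obtain i0 where i0: "infinite {i \<in> UNIV. W i = W i0}"
        using pigeonhole_infinite[of "UNIV :: nat set" W] by auto
      have "w j = W i0 j" for j
      proof -
        have "\<exists>i \<in> {i \<in> UNIV. W i = W i0}. j \<le> i"
        proof (rule ccontr)
          assume "\<not> ?thesis"
          then have "{i \<in> UNIV. W i = W i0} \<subseteq> {..<j}" by auto
          then show False using i0 finite_subset by blast
        qed
        then obtain i where "i \<in> {i \<in> UNIV. W i = W i0}" "j \<le> i" by blast
        then show ?thesis using W[of i] by auto
      qed
      then have "w = W i0" by auto
      then show "w \<in> S" using W by simp
    qed
  next
    show "S \<subseteq> lang \<Sigma> A"
    proof
      fix w assume wS: "w \<in> S"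
      have om: "w \<in> omega_words \<Sigma>" using wS Ssub phis by auto
      have RwRes: "Rw w i \<in> Res" for i using res_map[OF wS, of i] resne unfolding Rw_def by blast
      have RwNe: "Rw w i \<noteq> {}" for i using res_map[OF wS, of i] unfolding Rw_def by blast
      define r where "r = (\<lambda>i. f (Rw w i))"
      have "is_run A w r" unfolding is_run_def
      proof
        show "r 0 \<in> init A" unfolding r_def A_def Rw_def by simp
        show "\<forall>i. r (Suc i) \<in> trans A (r i) (w i)"
        proof
          fix i
          have "g (r i) = Rw w i" unfolding r_def using gf RwRes by simp
          moreover have "r i < card Res" unfolding r_def using fR RwRes by simp
          ultimately show "r (Suc i) \<in> trans A (r i) (w i)"
            unfolding A_def using RwSuc[of w i, symmetric] RwNe[of "Suc i"] by (simp add: r_def)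
        qed
      qed
      moreover have "accepting_run A r" unfolding accepting_run_def A_def by auto
      ultimately show "w \<in> lang \<Sigma> A" using om unfolding lang_def by auto
    qed
  qed
  have "wf_npa \<Sigma> A" unfolding wf_npa_def A_def using fR res0 gR derRes by auto
  moreover have "deterministic \<Sigma> A" unfolding deterministic_def A_def by auto
  moreover have "safety A" unfolding safety_def A_def by simp
  moreover have "size_npa A \<le> 1 + n * card \<Sigma> ^ n * (n * n + 2 * n)"
    unfolding size_npa_def A_def using cardRes by simp
  moreover have "lasso_precise_under \<Sigma> n (lang \<Sigma> A) \<phi>"
    unfolding lasso_precise_under_def langA using Ssub unfolding S_def lasso_lang_def by blast
  ultimately show ?thesis by blast
qed

lemma nat_bound:
  fixes n t :: nat
  assumes t: "1 \<le> t"
  shows "1 + n * t * (n * n + 2 * n) \<le> 8 * t * n ^ n"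
proof -
  consider "n = 0" | "n = 1" | "n = 2" | "3 \<le> n" by linarith
  then show ?thesis
  proof cases
    case 4
    have "n ^ 3 \<le> n ^ n" using 4 by (intro power_increasing) auto
    have "1 \<le> n ^ 3" using 4 by simp
    then have a: "1 \<le> t * n ^ 3" using mult_le_mono[OF t \<open>1 \<le> n ^ 3\<close>] by simp
    have b: "n * n \<le> n ^ 3" by (simp add: power3_eq_cube)
    have "1 + n * t * (n * n + 2 * n) = 1 + t * (n ^ 3) + 2 * t * (n * n)"
      by (simp add: power3_eq_cube algebra_simps)
    also have "\<dots> \<le> t * n ^ 3 + t * n ^ 3 + 2 * t * n ^ 3"
      using a mult_le_mono2[OF b, of "2 * t"] by linarith
    also have "\<dots> = 4 * t * n ^ 3" by simp
    also have "\<dots> \<le> 8 * t * n ^ n" using \<open>n ^ 3 \<le> n ^ n\<close> by simp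
    finally show ?thesis .
  qed (use t in auto)
qed

lemma powr_nlogn: "2 powr (real n * log 2 (real n)) = real n ^ n"
proof (cases "n = 0")
  case True then show ?thesis by simp
next
  case False
  then have "2 powr (real n * log 2 (real n)) = (2 powr (log 2 (real n))) powr real n"
    by (simp only: powr_powr mult.commute)
  also have "\<dots> = real n powr real n" using False by simp
  also have "\<dots> = real n ^ n" using False by (simp add: powr_realpow)
  finally show ?thesis .
qed


theorem theorem1:
  "\<exists>c :: real. c > 0 \<and>
     (\<forall>(\<Sigma> :: 'a set) (\<phi> :: (nat \<Rightarrow> 'a) set) (n :: nat).
        finite \<Sigma> \<and> \<Sigma> \<noteq> {} \<and> \<phi> \<subseteq> omega_words \<Sigma> \<longrightarrow>
        (\<exists>A :: 'a npa. wf_npa \<Sigma> A \<and> deterministic \<Sigma> A \<and> safety A \<and>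
           real (size_npa A) \<le> c * real (card \<Sigma>) ^ n * 2 powr (real n * log 2 (real n)) \<and>
           lasso_precise_under \<Sigma> n (lang \<Sigma> A) \<phi>))"
proof (intro exI[of _ "8::real"] conjI allI impI)
  show "(0::real) < 8" by simp
  fix \<Sigma> :: "'a set" and \<phi> :: "(nat \<Rightarrow> 'a) set" and n :: nat
  assume H: "finite \<Sigma> \<and> \<Sigma> \<noteq> {} \<and> \<phi> \<subseteq> omega_words \<Sigma>"
  obtain A :: "'a npa" where A: "wf_npa \<Sigma> A" "deterministic \<Sigma> A" "safety A"
      "size_npa A \<le> 1 + n * card \<Sigma> ^ n * (n * n + 2 * n)" "lasso_precise_under \<Sigma> n (lang \<Sigma> A) \<phi>"
    using main[of \<Sigma> \<phi> n] H by blast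
  have "0 < card \<Sigma>" using H by (simp add: card_gt_0_iff)
  then have t: "1 \<le> card \<Sigma> ^ n" by simp
  have "real (size_npa A) \<le> real (1 + n * card \<Sigma> ^ n * (n * n + 2 * n))"
    using A(4) by (simp only: of_nat_le_iff)
  also have "\<dots> \<le> real (8 * card \<Sigma> ^ n * n ^ n)"
    using nat_bound[OF t, of n] by (simp only: of_nat_le_iff)
  also have "\<dots> = 8 * real (card \<Sigma>) ^ n * 2 powr (real n * log 2 (real n))"
    by (simp add: powr_nlogn)
  finally show "\<exists>A :: 'a npa. wf_npa \<Sigma> A \<and> deterministic \<Sigma> A \<and> safety A \<and>
           real (size_npa A) \<le> 8 * real (card \<Sigma>) ^ n * 2 powr (real n * log 2 (real n)) \<and>
           lasso_precise_under \<Sigma> n (lang \<Sigma> A) \<phi>"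
    using A by blast
qed

end
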